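(* Let $(F,<_F)$ and $(G,<_G)$ be ordered groups, let $\prec$ be the ordering of $F*G$ described in the context, and give $F\times G$ the lexicographic ordering. Then the canonical homomorphism $\alpha\colon F*G\to F\times G$, $\alpha(f_1g_1f_2\cdots f_kg_k)=(f_1\cdots f_k,\,g_1\cdots g_k)$, is an order-homomorphism: $x\preceq y$ implies $\alpha(x)\le\alpha(y)$.
   Context: An ordered group is a group with a strict total order invariant under left and right multiplication. A homomorphism $\phi\colon(F,<_F)\to(G,<_G)$ of ordered groups is an order-homomorphism if $x\le_F y$ implies $\phi(x)\le_G\phi(y)$. Lexicographic order on $F\times G$: $(f,g)<(f',g')$ iff $f<_Ff'$, or $f=f'$ and $g<_Gg'$. Construction of $\prec$: in $R=\mathbb{Z}(F\times G)$ call a nonzero element positive if the coefficient of its lexicographically largest group element is a positive integer. Let $\rho\colon F*G\to M_2(R[t])$ be the homomorphism with $\rho(f)=\begin{pmatrix} f&(f-1)t\\0&1\end{pmatrix}$, $\rho(g)=\begin{pmatrix}1&0\\(g-1)t&g\end{pmatrix}$ ($f\in F,g\in G$); it is injective. Order the matrix positions $(1,1)$, $(2,2)$, then the off-diagonal positions in a fixed order. A nonzero $M=\sum_iM_it^i$ ($M_i\in M_2(R)$) is positive if for the least $n$ with $M_n\neq 0$ the first nonzero entry of $M_n$ is positive in $R$. Set $x\prec y$ iff $\rho(y)-\rho(x)$ is positive. *)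

theory Defs
  imports Main "HOL-Library.Poly_Mapping" "HOL-Library.Product_Plus"
begin

(* Groups are modelled by the (not necessarily commutative) type class group_add;
   the group operation is written +, the identity 0.  An ordering of a group is
   given as an explicit strict relation. *)

definition ordered_group :: "('a::group_add \<Rightarrow> 'a \<Rightarrow> bool) \<Rightarrow> bool" where
  "ordered_group lt \<longleftrightarrow>
     (\<forall>x. \<not> lt x x) \<and>
     (\<forall>x y z. lt x y \<longrightarrow> lt y z \<longrightarrow> lt x z) \<and>
     (\<forall>x y. x \<noteq> y \<longrightarrow> lt x y \<or> lt y x) \<and>
     (\<forall>x y z. lt x y \<longrightarrow> lt (z + x) (z + y)) \<and>
     (\<forall>x y z. lt x y \<longrightarrow> lt (x + z) (y + z))"

definition lex_less :: "('f \<Rightarrow> 'f \<Rightarrow> bool) \<Rightarrow> ('g \<Rightarrow> 'g \<Rightarrow> bool) \<Rightarrow> 'f \<times> 'g \<Rightarrow> 'f \<times> 'g \<Rightarrow> bool" where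
  "lex_less lF lG p q \<longleftrightarrow> lF (fst p) (fst q) \<or> (fst p = fst q \<and> lG (snd p) (snd q))"

definition lex_le :: "('f \<Rightarrow> 'f \<Rightarrow> bool) \<Rightarrow> ('g \<Rightarrow> 'g \<Rightarrow> bool) \<Rightarrow> 'f \<times> 'g \<Rightarrow> 'f \<times> 'g \<Rightarrow> bool" where
  "lex_le lF lG p q \<longleftrightarrow> lex_less lF lG p q \<or> p = q"

fun reduced_word :: "('f::group_add + 'g::group_add) list \<Rightarrow> bool" where
  "reduced_word [] = True"
| "reduced_word [Inl f] = (f \<noteq> 0)"
| "reduced_word [Inr g] = (g \<noteq> 0)"
| "reduced_word (Inl f # Inl f' # w) = False"
| "reduced_word (Inr g # Inr g' # w) = False"
| "reduced_word (Inl f # Inr g # w) = (f \<noteq> 0 \<and> reduced_word (Inr g # w))"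
| "reduced_word (Inr g # Inl f # w) = (g \<noteq> 0 \<and> reduced_word (Inl f # w))"

definition free_product :: "('f::group_add + 'g::group_add) list set" where
  "free_product = {w. reduced_word w}"

definition alpha :: "('f::group_add + 'g::group_add) list \<Rightarrow> 'f \<times> 'g" where
  "alpha w = (sum_list [f. Inl f \<leftarrow> w], sum_list [g. Inr g \<leftarrow> w])"

(* group ring R = Z(F x G) as finitely supported functions, multiplication = convolution *)
type_synonym ('f, 'g) gring = "('f \<times> 'g) \<Rightarrow>\<^sub>0 int"
type_synonym ('f, 'g) gpoly = "nat \<Rightarrow>\<^sub>0 ('f, 'g) gring"

(* 2x2 matrices:  M2 a b c d  =  [[a, b], [c, d]] *)
datatype 'r mat2 = M2 'r 'r 'r 'r

fun m2_mult :: "'r::semiring_0 mat2 \<Rightarrow> 'r mat2 \<Rightarrow> 'r mat2" where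
  "m2_mult (M2 a b c d) (M2 a' b' c' d') =
     M2 (a * a' + b * c') (a * b' + b * d') (c * a' + d * c') (c * b' + d * d')"

fun m2_minus :: "'r::ab_group_add mat2 \<Rightarrow> 'r mat2 \<Rightarrow> 'r mat2" where
  "m2_minus (M2 a b c d) (M2 a' b' c' d') = M2 (a - a') (b - b') (c - c') (d - d')"

definition m2_one :: "'r::semiring_1 mat2" where
  "m2_one = M2 1 0 0 1"

fun m2_map :: "('r \<Rightarrow> 's) \<Rightarrow> 'r mat2 \<Rightarrow> 's mat2" where
  "m2_map h (M2 a b c d) = M2 (h a) (h b) (h c) (h d)"

fun m2_entries :: "bool \<Rightarrow> 'r mat2 \<Rightarrow> 'r list" where
  "m2_entries offd (M2 a b c d) = [a, d] @ (if offd then [b, c] else [c, b])"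

definition gF :: "'f::group_add \<Rightarrow> ('f, 'g::group_add) gring" where
  "gF f = Poly_Mapping.single (f, 0) 1"

definition gG :: "'g::group_add \<Rightarrow> ('f::group_add, 'g) gring" where
  "gG g = Poly_Mapping.single (0, g) 1"

definition const_poly :: "('f::group_add, 'g::group_add) gring \<Rightarrow> ('f, 'g) gpoly" where
  "const_poly r = Poly_Mapping.single 0 r"

definition t_times :: "('f::group_add, 'g::group_add) gring \<Rightarrow> ('f, 'g) gpoly" where
  "t_times r = Poly_Mapping.single 1 r"

fun rho_letter :: "('f::group_add + 'g::group_add) \<Rightarrow> ('f, 'g) gpoly mat2" where
  "rho_letter (Inl f) = M2 (const_poly (gF f)) (t_times (gF f - 1)) 0 1"
| "rho_letter (Inr g) = M2 1 0 (t_times (gG g - 1)) (const_poly (gG g))"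

definition rho :: "('f::group_add + 'g::group_add) list \<Rightarrow> ('f, 'g) gpoly mat2" where
  "rho w = foldr (\<lambda>x M. m2_mult (rho_letter x) M) w m2_one"

definition R_pos :: "('f \<Rightarrow> 'f \<Rightarrow> bool) \<Rightarrow> ('g \<Rightarrow> 'g \<Rightarrow> bool) \<Rightarrow> ('f::group_add, 'g::group_add) gring \<Rightarrow> bool" where
  "R_pos lF lG r \<longleftrightarrow>
     (\<exists>m \<in> Poly_Mapping.keys r. (\<forall>k \<in> Poly_Mapping.keys r. k \<noteq> m \<longrightarrow> lex_less lF lG k m) \<and> Poly_Mapping.lookup r m > 0)"

definition coeff_mat :: "('f::group_add, 'g::group_add) gpoly mat2 \<Rightarrow> nat \<Rightarrow> ('f, 'g) gring mat2" where
  "coeff_mat M n = m2_map (\<lambda>p. Poly_Mapping.lookup p n) M"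

definition mat_pos :: "bool \<Rightarrow> ('f \<Rightarrow> 'f \<Rightarrow> bool) \<Rightarrow> ('g \<Rightarrow> 'g \<Rightarrow> bool) \<Rightarrow> ('f::group_add, 'g::group_add) gpoly mat2 \<Rightarrow> bool" where
  "mat_pos offd lF lG M \<longleftrightarrow>
     (\<exists>n. (\<forall>m < n. coeff_mat M m = M2 0 0 0 0) \<and> coeff_mat M n \<noteq> M2 0 0 0 0 \<and>
          R_pos lF lG (hd (filter (\<lambda>r. r \<noteq> 0) (m2_entries offd (coeff_mat M n)))))"

definition prec :: "bool \<Rightarrow> ('f \<Rightarrow> 'f \<Rightarrow> bool) \<Rightarrow> ('g \<Rightarrow> 'g \<Rightarrow> bool) \<Rightarrow>
    ('f::group_add + 'g::group_add) list \<Rightarrow> ('f + 'g) list \<Rightarrow> bool" where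
  "prec offd lF lG x y \<longleftrightarrow> mat_pos offd lF lG (m2_minus (rho y) (rho x))"

definition preceq :: "bool \<Rightarrow> ('f \<Rightarrow> 'f \<Rightarrow> bool) \<Rightarrow> ('g \<Rightarrow> 'g \<Rightarrow> bool) \<Rightarrow>
    ('f::group_add + 'g::group_add) list \<Rightarrow> ('f + 'g) list \<Rightarrow> bool" where
  "preceq offd lF lG x y \<longleftrightarrow> prec offd lF lG x y \<or> x = y"

end

theory Submission
  imports Defs
begin

lemma lookup_mult0:
  fixes f g :: "nat \<Rightarrow>\<^sub>0 'r::semiring_0"
  shows "Poly_Mapping.lookup (f * g) 0 = Poly_Mapping.lookup f 0 * Poly_Mapping.lookup g 0"
proof -
  have "\<And>l. (\<Sum>q. Poly_Mapping.lookup g q when 0 = l + q)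
      = (\<Sum>q. (Poly_Mapping.lookup g q when l = 0) when q = 0)"
    by (rule Sum_any.cong) (auto simp: when_def)
  then have "\<And>l. (\<Sum>q. Poly_Mapping.lookup g q when 0 = l + q) = (Poly_Mapping.lookup g 0 when l = 0)"
    by simp
  then have "Poly_Mapping.lookup (f * g) 0 = (\<Sum>l. Poly_Mapping.lookup f l * (Poly_Mapping.lookup g 0 when l = 0))"
    by (simp add: lookup_mult)
  also have "\<dots> = (\<Sum>l. Poly_Mapping.lookup f l * Poly_Mapping.lookup g 0 when l = 0)"
    by (rule Sum_any.cong) (auto simp: when_def)
  finally show ?thesis by simp
qed

abbreviation sg :: "'f::group_add \<times> 'g::group_add \<Rightarrow> ('f,'g) gring" where
  "sg k \<equiv> Poly_Mapping.single k 1"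

lemma sg00 [simp]: "sg (0,0) = 1"
  by (rule poly_mapping_eqI) (simp add: lookup_one lookup_single when_def zero_prod_def)

lemma sg_inj [simp]: "(sg a = sg b) = (a = b)"
proof
  assume "sg a = sg b"
  then have "Poly_Mapping.lookup (sg a) a = Poly_Mapping.lookup (sg b) a" by simp
  then show "a = b" by (simp add: lookup_single when_def split: if_splits)
qed simp

lemma coeff0_rho:
  "coeff_mat (rho w) 0 = M2 (sg (fst (alpha w), 0)) 0 0 (sg (0, snd (alpha w)))"
proof (induction w)
  case Nil
  show ?case by (simp add: coeff_mat_def rho_def m2_one_def alpha_def lookup_one)
next
  case (Cons a w)
  obtain A B C D where R: "rho w = M2 A B C D" by (cases "rho w")
  have rr: "rho (a # w) = m2_mult (rho_letter a) (rho w)" by (simp add: rho_def)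
  from Cons R have L: "Poly_Mapping.lookup A 0 = sg (fst (alpha w), 0)" "Poly_Mapping.lookup B 0 = 0"
     "Poly_Mapping.lookup C 0 = 0" "Poly_Mapping.lookup D 0 = sg (0, snd (alpha w))"
    by (simp_all add: coeff_mat_def)
  show ?case
  proof (cases a)
    case (Inl f)
    have al: "alpha (a # w) = (f + fst (alpha w), snd (alpha w))"
      using Inl by (simp add: alpha_def)
    show ?thesis unfolding al rr R using Inl
      by (simp add: coeff_mat_def lookup_add lookup_mult0 L const_poly_def t_times_def gF_def
          mult_single lookup_one lookup_single)
  next
    case (Inr g)
    have al: "alpha (a # w) = (fst (alpha w), g + snd (alpha w))"
      using Inr by (simp add: alpha_def)
    show ?thesis unfolding al rr R using Inr
      by (simp add: coeff_mat_def lookup_add lookup_mult0 L const_poly_def t_times_def gG_def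
          mult_single lookup_one lookup_single)
  qed
qed

lemma coeff_minus: "coeff_mat (m2_minus M N) n
   = m2_minus (coeff_mat M n) (coeff_mat N n)"
  by (cases M; cases N) (simp add: coeff_mat_def lookup_minus)

lemma R_pos_diff:
  assumes "a \<noteq> b" "R_pos lF lG (sg a - sg b)"
  shows "lex_less lF lG b a"
proof -
  from assms(2) obtain m where m: "m \<in> Poly_Mapping.keys (sg a - sg b)"
    "\<forall>k \<in> Poly_Mapping.keys (sg a - sg b). k \<noteq> m \<longrightarrow> lex_less lF lG k m"
    "Poly_Mapping.lookup (sg a - sg b) m > 0"
    unfolding R_pos_def by blast
  from m(3) have "m = a" "m \<noteq> b"
    by (auto simp: lookup_minus lookup_single when_def split: if_splits)
  moreover have "b \<in> Poly_Mapping.keys (sg a - sg b)"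
    using assms(1) by (simp add: in_keys_iff lookup_minus lookup_single when_def)
  ultimately show ?thesis using m(2) by auto
qed

theorem proposition4p2:
  fixes lF :: "'f::group_add \<Rightarrow> 'f \<Rightarrow> bool" and lG :: "'g::group_add \<Rightarrow> 'g \<Rightarrow> bool"
    and offd :: bool
    and x y :: "('f + 'g) list"
  assumes "ordered_group lF" and "ordered_group lG"
    and "x \<in> free_product" and "y \<in> free_product"
    and "preceq offd lF lG x y"
  shows "lex_le lF lG (alpha x) (alpha y)"
proof (cases "alpha x = alpha y")
  case True
  then show ?thesis by (simp add: lex_le_def)
next
  case False
  obtain fx gx where ax: "alpha x = (fx, gx)" by (cases "alpha x")
  obtain fy gy where ay: "alpha y = (fy, gy)" by (cases "alpha y")
  have irr: "\<not> lF 0 0" using assms(1) by (simp add: ordered_group_def)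
  have ne: "x \<noteq> y" using False by auto
  then have p: "prec offd lF lG x y" using assms(5) by (simp add: preceq_def)
  have C0: "coeff_mat (m2_minus (rho y) (rho x)) 0
      = M2 (sg (fy, 0) - sg (fx, 0)) 0 0 (sg (0, gy) - sg (0, gx))"
    by (simp add: coeff_minus coeff0_rho ax ay)
  have nz: "coeff_mat (m2_minus (rho y) (rho x)) 0 \<noteq> M2 0 0 0 0"
    proof -
    have d: "\<not> (fy = fx \<and> gy = gx)" using False ax ay by auto
    then show ?thesis by (simp add: C0)
  qed
  from p obtain n where n: "\<forall>m < n. coeff_mat (m2_minus (rho y) (rho x)) m = M2 0 0 0 0"
    "coeff_mat (m2_minus (rho y) (rho x)) n \<noteq> M2 0 0 0 0"
    "R_pos lF lG (hd (filter (\<lambda>r. r \<noteq> 0) (m2_entries offd (coeff_mat (m2_minus (rho y) (rho x)) n))))"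
    unfolding prec_def mat_pos_def by blast
  have "n = 0" using n(1) nz by (cases n) auto
  with n(3) have P: "R_pos lF lG (hd (filter (\<lambda>r. r \<noteq> 0)
      (m2_entries offd (M2 (sg (fy, 0) - sg (fx, 0)) 0 0 (sg (0, gy) - sg (0, gx))))))"
    by (simp add: C0)
  show ?thesis
  proof (cases "fx = fy")
    case True
    then have "gx \<noteq> gy" using False ax ay by auto
    then have "R_pos lF lG (sg (0, gy) - sg (0, gx))" using P True by (cases offd) simp_all
    then have "lex_less lF lG (0, gx) (0, gy)"
      using R_pos_diff[of "(0,gy)" "(0,gx)" lF lG] \<open>gx \<noteq> gy\<close> by simp
    then have "lG gx gy" using irr by (simp add: lex_less_def)
    then show ?thesis using True ax ay by (simp add: lex_le_def lex_less_def)
  next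
    case fF: False
    then have "R_pos lF lG (sg (fy, 0) - sg (fx, 0))" using P by (cases offd) simp_all
    then have "lex_less lF lG (fx, 0) (fy, 0)"
      using R_pos_diff[of "(fy,0)" "(fx,0)" lF lG] fF by simp
    then have "lF fx fy" using fF by (simp add: lex_less_def)
    then show ?thesis using ax ay by (simp add: lex_le_def lex_less_def)
  qed
qed

end
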